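(* Let $\Gamma_\mu:\mathbb{R}^N_+\to\mathbb{R}^N_+$ be monotone and satisfy the small gain condition $\Gamma_\mu(s)\not\geq s$ for all $s\in\mathbb{R}^N_+\setminus\{0\}$. Let $\kappa_0>0$, $\kappa_\Gamma>\kappa_h>0$ and let $\phi:\mathbb{R}^N_+\to\mathbb{R}^N$ be defined by $$\phi(v)=\Gamma_\mu(v)\Big(1+\min\Big\{0,\frac{\kappa_\Gamma-2\|v\|}{\|v\|+\kappa_0}\Big\}\Big)+\max\{0,\kappa_h-2\|v\|\}\,e .$$ If $s\in\mathbb{R}^N_+$ satisfies $s=\phi(s)$, then $\Gamma_\mu(s)\ll s$ (i.e. $s\in\Omega(\Gamma_\mu)$) and $\|s\|<\kappa_h/2$.
   Context: On $\mathbb{R}^N$: $v\geq w$ iff $v_i\ge w_i$ for all $i$; $v>w$ iff $v\ge w$ and $v\ne w$; $v\gg w$ iff $v_i>w_i$ for all $i$; $\not\geq$ is the negation of $\geq$. $\|\cdot\|$ is the Euclidean norm and $e=(1,\dots,1)^\top\in\mathbb{R}^N$. A map $T:\mathbb{R}^N_+\to\mathbb{R}^N_+$ is monotone if $v\le w$ implies $T(v)\le T(w)$. The decay set is $\Omega(\Gamma_\mu)=\{s\in\mathbb{R}^N_+:\Gamma_\mu(s)\ll s\}$. *)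

theory Defs
  imports "HOL-Analysis.Analysis"
begin

text \<open>Componentwise orders on R^N, with index type 'n (N = CARD('n)).\<close>
definition vge :: "real^'n \<Rightarrow> real^'n \<Rightarrow> bool" where
  "vge v w \<longleftrightarrow> (\<forall>i. v $ i \<ge> w $ i)"

definition vgg :: "real^'n \<Rightarrow> real^'n \<Rightarrow> bool" where
  "vgg v w \<longleftrightarrow> (\<forall>i. v $ i > w $ i)"

definition nonneg_orthant :: "(real^'n) set" where
  "nonneg_orthant = {v. vge v 0}"

definition monotone_pos :: "(real^'n \<Rightarrow> real^'n) \<Rightarrow> bool" where
  "monotone_pos T \<longleftrightarrow> (\<forall>v\<in>nonneg_orthant. \<forall>w\<in>nonneg_orthant. vge w v \<longrightarrow> vge (T w) (T v))"

definition decay_set :: "(real^'n \<Rightarrow> real^'n) \<Rightarrow> (real^'n) set" where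
  "decay_set G = {s\<in>nonneg_orthant. vgg s (G s)}"

definition phi :: "(real^'n \<Rightarrow> real^'n) \<Rightarrow> real \<Rightarrow> real \<Rightarrow> real \<Rightarrow> real^'n \<Rightarrow> real^'n" where
  "phi G k0 kG kh v =
     (1 + min 0 ((kG - 2 * norm v) / (norm v + k0))) *\<^sub>R G v
     + max 0 (kh - 2 * norm v) *\<^sub>R (\<chi> i. 1)"

end

theory Submission
  imports Defs
begin

theorem mainTheorem2:
  fixes G :: "real^'n \<Rightarrow> real^'n" and k0 kG kh :: real and s :: "real^'n"
  assumes maps: "\<forall>v\<in>nonneg_orthant. G v \<in> nonneg_orthant"
    and mono: "monotone_pos G"
    and sgc: "\<forall>v\<in>nonneg_orthant. v \<noteq> 0 \<longrightarrow> \<not> vge (G v) v"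
    and k0: "k0 > 0" and kh: "kh > 0" and kGh: "kG > kh"
    and s: "s \<in> nonneg_orthant" and fixp: "s = phi G k0 kG kh s"
  shows "s \<in> decay_set G \<and> norm s < kh / 2"
proof -
  define c where "c = 1 + min 0 ((kG - 2 * norm s) / (norm s + k0))"
  define h where "h = max 0 (kh - 2 * norm s)"
  have eq: "\<And>i. s $ i = c * G s $ i + h"
  proof -
    fix i
    have "s $ i = (phi G k0 kG kh s) $ i" using fixp by simp
    also have "\<dots> = c * G s $ i + h" unfolding phi_def c_def h_def by simp
    finally show "s $ i = c * G s $ i + h" .
  qed
  have Gs: "\<And>i. G s $ i \<ge> 0" using maps s unfolding nonneg_orthant_def vge_def by auto
  have sp: "\<And>i. s $ i \<ge> 0" using s unfolding nonneg_orthant_def vge_def by auto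
  have lt: "norm s < kh / 2"
  proof (rule ccontr)
    assume "\<not> ?thesis"
    hence ge: "norm s \<ge> kh/2" by simp
    hence h0: "h = 0" unfolding h_def by simp
    have sne: "s \<noteq> 0" using ge kh by auto
    have c1: "c \<le> 1" unfolding c_def by simp
    show False
    proof (cases "c \<ge> 0")
      case True
      have "vge (G s) s" unfolding vge_def
      proof
        fix i
        have "c * G s $ i \<le> 1 * G s $ i" by (rule mult_right_mono[OF c1 Gs])
        thus "s $ i \<le> G s $ i" using eq[of i] h0 by simp
      qed
      thus False using sgc s sne by blast
    next
      case False
      have "\<And>i. s $ i = 0"
      proof -
        fix i
        have "c * G s $ i \<le> 0" using False Gs[of i] by (simp add: mult_nonpos_nonneg)
        thus "s $ i = 0" using eq[of i] h0 sp[of i] by simp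
      qed
      hence "s = 0" by (simp add: vec_eq_iff)
      thus False using sne by simp
    qed
  qed
  have hpos: "h > 0" using lt unfolding h_def by simp
  have "(kG - 2 * norm s) / (norm s + k0) > 0"
    using lt kGh k0 norm_ge_zero[of s] by (intro divide_pos_pos) (auto simp: add_nonneg_pos)
  hence c1: "c = 1" unfolding c_def by simp
  have "vgg s (G s)" unfolding vgg_def using eq c1 hpos by simp
  thus ?thesis using lt s unfolding decay_set_def by simp
qed

end
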